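(* Let $L\ge1$ be an integer. For Lebesgue-almost every $c\in\mathbb{C}^L$, the family of $L^2$ matrices $$\big\{(\pi(k,n)c)(\pi(k,n)c)^*\big\}_{(k,n)\in\mathbb{Z}_L\times\mathbb{Z}_L}\subseteq\mathbb{C}^{L\times L}$$ is linearly independent; that is, the diagonal pattern $\Lambda_{\mathrm{diag}}=\{((k,n),(k,n)):(k,n)\in\mathbb{Z}_L^2\}$ is permissible for almost every $c$.
   Context: On $\mathbb{C}^L$ (indices mod $L$): $T^kc[p]=c[p-k]$, $M^nc[p]=e^{2\pi inp/L}c[p]$, $\pi(k,n)=M^nT^k$. A set $\Lambda\subseteq(\mathbb{Z}_L^2)^2$ is a permissible pattern (for $c$) if the matrices $\{\pi(\lambda)c\,(\pi(\lambda')c)^*\}_{(\lambda,\lambda')\in\Lambda}$ are linearly independent. *)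

theory Defs
  imports "HOL-Analysis.Analysis" "HOL-Probability.Probability"
begin

text \<open>Vectors in C^L are functions nat => complex, only indices 0..L-1 matter;
  Z_L is represented by {0..<L}.\<close>

definition lebesgue_CL :: "nat \<Rightarrow> (nat \<Rightarrow> complex) measure" where
  "lebesgue_CL L = PiM {..<L} (\<lambda>_. (lborel :: complex measure))"

definition transl :: "nat \<Rightarrow> nat \<Rightarrow> (nat \<Rightarrow> complex) \<Rightarrow> (nat \<Rightarrow> complex)" where
  "transl L k c = (\<lambda>p. c (nat ((int p - int k) mod int L)))"

definition modul :: "nat \<Rightarrow> nat \<Rightarrow> (nat \<Rightarrow> complex) \<Rightarrow> (nat \<Rightarrow> complex)" where
  "modul L n c = (\<lambda>p. exp (2 * of_real pi * \<i> * of_nat n * of_nat p / of_nat L) * c p)"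

definition tfshift :: "nat \<Rightarrow> nat \<times> nat \<Rightarrow> (nat \<Rightarrow> complex) \<Rightarrow> (nat \<Rightarrow> complex)" where
  "tfshift L kn c = modul L (snd kn) (transl L (fst kn) c)"

definition permissible ::
  "nat \<Rightarrow> ((nat \<times> nat) \<times> (nat \<times> nat)) set \<Rightarrow> (nat \<Rightarrow> complex) \<Rightarrow> bool" where
  "permissible L \<Lambda> c \<longleftrightarrow>
     (\<forall>a :: (nat \<times> nat) \<times> (nat \<times> nat) \<Rightarrow> complex.
        (\<forall>p<L. \<forall>q<L. (\<Sum>ll\<in>\<Lambda>. a ll * tfshift L (fst ll) c p * cnj (tfshift L (snd ll) c q)) = 0)
        \<longrightarrow> (\<forall>ll\<in>\<Lambda>. a ll = 0))"

definition diag_pattern :: "nat \<Rightarrow> ((nat \<times> nat) \<times> (nat \<times> nat)) set" where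
  "diag_pattern L = {(kn, kn) | kn. kn \<in> {..<L} \<times> {..<L}}"

end

theory Submission imports Defs begin

lemma psf: "product_sigma_finite (\<lambda>_::nat. (lborel::complex measure))"
  unfolding product_sigma_finite_def by (simp add: lborel.sigma_finite_measure_axioms)

lemma fiber_null:
  assumes iL: "i < L" and S: "S \<in> sets (lebesgue_CL L)"
    and fib: "\<And>x. \<exists>N\<in>null_sets (lborel::complex measure). {y. x(i := y) \<in> S} \<subseteq> N"
  shows "S \<in> null_sets (lebesgue_CL L)"
proof -
  interpret product_sigma_finite "\<lambda>_::nat. (lborel::complex measure)" by (rule psf)
  let ?I = "{..<L} - {i}"
  have ins: "{..<L} = insert i ?I" using iL by auto
  have Sm: "S \<in> sets (Pi\<^sub>M (insert i ?I) (\<lambda>_. lborel))" using S ins unfolding lebesgue_CL_def by simp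
  have "emeasure (lebesgue_CL L) S = (\<integral>\<^sup>+ x. indicator S x \<partial>(Pi\<^sub>M (insert i ?I) (\<lambda>_. lborel)))"
    using Sm ins unfolding lebesgue_CL_def by (simp add: nn_integral_indicator)
  also have "\<dots> = (\<integral>\<^sup>+ x. (\<integral>\<^sup>+ y. indicator S (x(i := y)) \<partial>lborel) \<partial>(Pi\<^sub>M ?I (\<lambda>_. lborel)))"
    by (rule product_nn_integral_insert) (use Sm in auto)
  also have "\<dots> = (\<integral>\<^sup>+ x. 0 \<partial>(Pi\<^sub>M ?I (\<lambda>_. lborel)))"
  proof -
    have z: "(\<integral>\<^sup>+ y. indicator S (x(i := y)) \<partial>lborel) = 0" for x
    proof -
      obtain N where N: "N \<in> null_sets lborel" "{y. x(i := y) \<in> S} \<subseteq> N" using fib[of x] by blast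
    have "(\<integral>\<^sup>+ y. indicator S (x(i := y)) \<partial>lborel) \<le> (\<integral>\<^sup>+ y. indicator N y \<partial>lborel)"
      using N(2) by (intro nn_integral_mono) (auto split: split_indicator)
    also have "\<dots> = emeasure lborel N"
      using N by (intro nn_integral_indicator) (simp add: null_sets_def)
    also have "\<dots> = 0" using N by (simp add: null_sets_def)
    finally show ?thesis by simp
    qed
    show ?thesis by (simp add: z)
  qed
  finally show ?thesis using S by (simp add: null_sets_def)
qed

lemma null_of_negl:
  fixes N :: "complex set"
  assumes "negligible N" "closed N"
  shows "N \<in> null_sets lborel"
proof -
  have "N \<in> sets lborel" using assms by (simp add: borel_closed)
  thus ?thesis using assms negligible_iff_null_sets null_sets_completion_iff by blast
qed

lemma line_null:
  fixes \<alpha> \<beta> \<gamma> :: complex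
  assumes "\<alpha> \<noteq> 0 \<or> \<beta> \<noteq> 0"
  shows "\<exists>N\<in>null_sets lborel. {y. \<alpha> * y + \<beta> * cnj y + \<gamma> = 0} \<subseteq> N"
proof -
  define T where "T y = \<alpha> * y + \<beta> * cnj y" for y
  obtain u where u: "T u \<noteq> 0"
  proof (cases "T 1 = 0")
    case True
    have "T \<i> \<noteq> 0"
    proof
      assume "T \<i> = 0"
      with True have "\<alpha> + \<beta> = 0" "\<i> * (\<alpha> - \<beta>) = 0" by (auto simp: T_def algebra_simps)
      thus False using assms by auto
    qed
    thus ?thesis using that by blast
  next
    case False thus ?thesis using that by blast
  qed
  define w where "w = T u"
  define s where "s = cnj w * \<alpha> + w * cnj \<beta>"
  have phi: "Re (cnj w * T y) = cnj s \<bullet> y" for y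
    by (simp add: T_def s_def inner_complex_def algebra_simps)
  have "cnj s \<noteq> 0"
  proof
    assume "cnj s = 0"
    hence "Re (cnj w * T u) = 0" using phi[of u] by simp
    moreover have "Re (cnj w * T u) = (cmod w)^2" unfolding w_def
      by (simp add: complex_mult_cnj cmod_def power2_eq_square)
    ultimately show False using u w_def by simp
  qed
  have sub: "{y. \<alpha> * y + \<beta> * cnj y + \<gamma> = 0} \<subseteq> {y. cnj s \<bullet> y = - Re (cnj w * \<gamma>)}"
  proof
    fix y assume "y \<in> {y. \<alpha> * y + \<beta> * cnj y + \<gamma> = 0}"
    hence "T y = - \<gamma>" by (simp add: T_def add_eq_0_iff)
    thus "y \<in> {y. cnj s \<bullet> y = - Re (cnj w * \<gamma>)}" using phi[of y] by simp
  qed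
  have "negligible {y. cnj s \<bullet> y = - Re (cnj w * \<gamma>)}"
    using \<open>cnj s \<noteq> 0\<close> by (rule negligible_hyperplane[OF disjI1])
  moreover have "closed {y. cnj s \<bullet> y = - Re (cnj w * \<gamma>)}"
    by (intro closed_Collect_eq continuous_intros)
  ultimately show ?thesis using sub null_of_negl by blast
qed

lemma circle_null:
  fixes \<gamma> :: complex
  shows "\<exists>N\<in>null_sets lborel. {y. y * cnj y + \<gamma> = 0} \<subseteq> N"
proof -
  have sub: "{y. y * cnj y + \<gamma> = 0} \<subseteq> sphere 0 (sqrt (- Re \<gamma>))"
  proof
    fix y assume "y \<in> {y. y * cnj y + \<gamma> = 0}"
    hence "y * cnj y = - \<gamma>" by (simp add: add_eq_0_iff)
    hence "(cmod y)^2 = - Re \<gamma>"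
    proof -
      have "Re (y * cnj y) = (cmod y)^2" using cmod_power2[of y] by (simp add: power2_eq_square)
      thus ?thesis using \<open>y * cnj y = - \<gamma>\<close> by simp
    qed
    hence "cmod y = sqrt (- Re \<gamma>)" by (metis norm_ge_zero real_sqrt_abs abs_of_nonneg)
    thus "y \<in> sphere 0 (sqrt (- Re \<gamma>))" by simp
  qed
  have "sphere (0::complex) (sqrt (- Re \<gamma>)) \<in> null_sets lborel"
    by (rule null_of_negl) (auto simp: negligible_sphere)
  thus ?thesis using sub by blast
qed

lemma point_null: "\<exists>N\<in>null_sets (lborel::complex measure). {y. y = (0::complex)} \<subseteq> N"
  by (intro bexI[of _ "{0}"]) auto


definition ee :: "nat \<Rightarrow> int \<Rightarrow> complex" where
  "ee L t = exp (2 * of_real pi * \<i> * of_int t / of_nat L)"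
definition ix :: "nat \<Rightarrow> int \<Rightarrow> nat" where
  "ix L m = nat (m mod int L)"
definition amb :: "nat \<Rightarrow> (nat \<Rightarrow> complex) \<Rightarrow> nat \<Rightarrow> nat \<Rightarrow> complex" where
  "amb L c j d = (\<Sum>m<L. ee L (- (int j * int m)) * c m * cnj (c (ix L (int m - int d))))"

lemma ix_lt: "L \<ge> 1 \<Longrightarrow> ix L m < L"
  unfolding ix_def by (simp add: nat_less_iff)

lemma ix_nat: "m < L \<Longrightarrow> ix L (int m) = m"
  unfolding ix_def by simp

lemma ix_zero: "m < L \<Longrightarrow> d < L \<Longrightarrow> ix L (int m - int d) = 0 \<longleftrightarrow> m = d"
proof -
  assume a: "m < L" "d < L"
  have "ix L (int m - int d) = 0 \<longleftrightarrow> (int m - int d) mod int L = 0"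
  proof -
    have "0 \<le> (int m - int d) mod int L" using a by simp
    thus ?thesis unfolding ix_def by linarith
  qed
  also have "\<dots> \<longleftrightarrow> m = d"
  proof
    assume "(int m - int d) mod int L = 0"
    then obtain k where k: "int m - int d = int L * k" by (auto elim!: dvdE simp: mod_eq_0_iff_dvd)
    have "k = 0"
    proof (rule ccontr)
      assume "k \<noteq> 0"
      hence "1 \<le> \<bar>k\<bar>" by linarith
      hence "int L * 1 \<le> int L * \<bar>k\<bar>" by (intro mult_left_mono) auto
      hence "\<bar>int L * k\<bar> \<ge> int L" by (simp add: abs_mult)
      with k a show False by linarith
    qed
    with k show "m = d" by simp
  qed simp
  finally show ?thesis .
qed

lemma amb_meas:
  assumes "L \<ge> 1"
  shows "(\<lambda>c. amb L c j d) \<in> borel_measurable (lebesgue_CL L)"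
proof -
  have comp: "(\<lambda>c. c m) \<in> borel_measurable (lebesgue_CL L)" if "m < L" for m
    unfolding lebesgue_CL_def using that measurable_component_singleton[of m "{..<L}" "\<lambda>_. lborel"] by auto
  have cnjm: "(\<lambda>c. cnj (c m)) \<in> borel_measurable (lebesgue_CL L)" if "m < L" for m
    using measurable_compose[OF comp[OF that] borel_measurable_continuous_onI[OF continuous_on_cnj]]
    by (simp add: o_def)
  have trm: "(\<lambda>c. ee L (- (int j * int m)) * c m * cnj (c (ix L (int m - int d)))) \<in> borel_measurable (lebesgue_CL L)"
    if "m < L" for m
    using comp[OF that] cnjm[OF ix_lt[OF assms]] by measurable
  show ?thesis unfolding amb_def
    by (rule borel_measurable_sum) (use trm in auto)
qed

lemma zero_set_meas:
  assumes "f \<in> borel_measurable M"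
  shows "{c \<in> space M. f c = (0::complex)} \<in> sets M"
proof -
  have "{c \<in> space M. f c = 0} = f -` {0} \<inter> space M" by auto
  thus ?thesis using measurable_sets[OF assms, of "{0}"] by simp
qed


lemma ee0[simp]: "ee L 0 = 1" by (simp add: ee_def)
lemma ix0[simp]: "ix L 0 = 0" by (simp add: ix_def)

lemma decomp0:
  assumes "L \<ge> 1"
  shows "\<exists>\<gamma>. \<forall>y. amb L (x(0:=y)) j 0 = y * cnj y + \<gamma>"
proof (intro exI allI)
  fix y
  let ?f = "\<lambda>c m. ee L (- (int j * int m)) * c m * cnj (c (ix L (int m - int 0)))"
  have "amb L (x(0:=y)) j 0 = ?f (x(0:=y)) 0 + sum (?f (x(0:=y))) ({..<L} - {0})"
    unfolding amb_def using assms by (intro sum.remove) auto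
  also have "sum (?f (x(0:=y))) ({..<L} - {0}) = sum (?f x) ({..<L} - {0})"
    by (intro sum.cong) (auto simp: ix_nat)
  also have "?f (x(0:=y)) 0 = y * cnj y" using assms by (simp add: ix_nat)
  finally show "amb L (x(0:=y)) j 0 = y * cnj y + sum (?f x) ({..<L} - {0})" .
qed

lemma ix_neg: "0 < d \<Longrightarrow> d < L \<Longrightarrow> ix L (0 - int d) = L - d"
proof -
  assume a: "0 < d" "d < L"
  have "(- int d) mod int L = (int L - int d) mod int L"
    by (metis mod_add_self2 uminus_add_conv_diff add.commute)
  also have "\<dots> = int L - int d" using a by (intro mod_pos_pos_trivial) auto
  finally show ?thesis unfolding ix_def using a by simp
qed

lemma decompd:
  assumes "0 < d" "d < L"
  shows "\<exists>\<gamma>. \<forall>y. amb L (x(0:=y)) j d = cnj (x (L - d)) * y + ee L (- (int j * int d)) * x d * cnj y + \<gamma>"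
proof (intro exI allI)
  fix y
  let ?f = "\<lambda>c m. ee L (- (int j * int m)) * c m * cnj (c (ix L (int m - int d)))"
  have "amb L (x(0:=y)) j d = ?f (x(0:=y)) 0 + sum (?f (x(0:=y))) ({..<L} - {0})"
    unfolding amb_def using assms by (intro sum.remove) auto
  also have "sum (?f (x(0:=y))) ({..<L} - {0}) = ?f (x(0:=y)) d + sum (?f (x(0:=y))) ({..<L} - {0} - {d})"
    using assms by (intro sum.remove) auto
  also have "sum (?f (x(0:=y))) ({..<L} - {0} - {d}) = sum (?f x) ({..<L} - {0} - {d})"
  proof (intro sum.cong refl)
    fix m assume m: "m \<in> {..<L} - {0} - {d}"
    hence "ix L (int m - int d) \<noteq> 0" using ix_zero[of m L d] assms by auto
    thus "?f (x(0:=y)) m = ?f x m" using m by auto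
  qed
  also have "?f (x(0:=y)) 0 = cnj (x (L - d)) * y"
  proof -
    have "ix L (- int d) = L - d" using ix_neg[OF assms] by simp
    thus ?thesis using assms by simp
  qed
  also have "?f (x(0:=y)) d = ee L (- (int j * int d)) * x d * cnj y" using assms by (simp add: ix_def)
  finally show "amb L (x(0:=y)) j d = cnj (x (L - d)) * y + ee L (- (int j * int d)) * x d * cnj y + sum (?f x) ({..<L} - {0} - {d})"
    by (simp add: algebra_simps fun_upd_def)
qed


lemma ee_nz: "ee L t \<noteq> 0" by (simp add: ee_def)

lemma coord_zero_null:
  assumes "i < L"
  shows "{c \<in> space (lebesgue_CL L). c i = 0} \<in> null_sets (lebesgue_CL L)"
proof (rule fiber_null[OF assms])
  have comp: "(\<lambda>c. c i) \<in> borel_measurable (lebesgue_CL L)"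
    unfolding lebesgue_CL_def using assms measurable_component_singleton[of i "{..<L}" "\<lambda>_. lborel"] by auto
  show "{c \<in> space (lebesgue_CL L). c i = 0} \<in> sets (lebesgue_CL L)" by (rule zero_set_meas[OF comp])
  fix x
  show "\<exists>N\<in>null_sets (lborel::complex measure). {y. x(i := y) \<in> {c \<in> space (lebesgue_CL L). c i = 0}} \<subseteq> N"
    using point_null by auto
qed

lemma amb_null:
  assumes L: "L \<ge> 1" and j: "j < L" and d: "d < L"
  shows "{c \<in> space (lebesgue_CL L). amb L c j d = 0} \<in> null_sets (lebesgue_CL L)"
proof (cases "d = 0")
  case True
  show ?thesis
  proof (rule fiber_null)
    show "0 < L" using L by simp
    show "{c \<in> space (lebesgue_CL L). amb L c j d = 0} \<in> sets (lebesgue_CL L)"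
      by (rule zero_set_meas[OF amb_meas[OF L]])
    fix x
    obtain \<gamma> where g: "\<forall>y. amb L (x(0:=y)) j 0 = y * cnj y + \<gamma>" using decomp0[OF L] by blast
    obtain N where N: "N \<in> null_sets lborel" "{y. y * cnj y + \<gamma> = 0} \<subseteq> N" using circle_null by blast
    show "\<exists>N\<in>null_sets (lborel::complex measure). {y. x(0 := y) \<in> {c \<in> space (lebesgue_CL L). amb L c j d = 0}} \<subseteq> N"
      using N g True by (intro bexI[of _ N]) auto
  qed
next
  case False
  hence d0: "0 < d" by simp
  let ?S = "{c \<in> space (lebesgue_CL L). amb L c j d = 0}"
  let ?S1 = "{c \<in> space (lebesgue_CL L). amb L c j d = 0} - ({c \<in> space (lebesgue_CL L). c d = 0} \<inter> {c \<in> space (lebesgue_CL L). c (L - d) = 0})"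
  have m1: "?S \<in> sets (lebesgue_CL L)" by (rule zero_set_meas[OF amb_meas[OF L]])
  have n2: "{c \<in> space (lebesgue_CL L). c d = 0} \<in> null_sets (lebesgue_CL L)" by (rule coord_zero_null[OF d])
  have n3: "{c \<in> space (lebesgue_CL L). c (L - d) = 0} \<in> null_sets (lebesgue_CL L)"
    by (rule coord_zero_null) (use d0 d in auto)
  have n1: "?S1 \<in> null_sets (lebesgue_CL L)"
  proof (rule fiber_null)
    show "0 < L" using L by simp
    show "?S1 \<in> sets (lebesgue_CL L)" using m1 n2 n3 by auto
    fix x
    obtain \<gamma> where g: "\<forall>y. amb L (x(0:=y)) j d = cnj (x (L - d)) * y + ee L (- (int j * int d)) * x d * cnj y + \<gamma>"
      using decompd[OF d0 d] by blast
    have xd: "(x(0:=y)) d = x d" "(x(0:=y)) (L - d) = x (L - d)" for y using d0 d by auto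
    show "\<exists>N\<in>null_sets (lborel::complex measure). {y. x(0 := y) \<in> ?S1} \<subseteq> N"
    proof (cases "x d = 0 \<and> x (L - d) = 0")
      case True
      hence "{y. x(0 := y) \<in> ?S1} = {}" using xd by auto
      thus ?thesis by (intro bexI[of _ "{}"]) auto
    next
      case False
      hence "cnj (x (L - d)) \<noteq> 0 \<or> ee L (- (int j * int d)) * x d \<noteq> 0" using ee_nz by auto
      then obtain N where N: "N \<in> null_sets lborel"
        "{y. cnj (x (L - d)) * y + ee L (- (int j * int d)) * x d * cnj y + \<gamma> = 0} \<subseteq> N"
        using line_null by blast
      show ?thesis using N g by (intro bexI[of _ N]) auto
    qed
  qed
  have "?S \<subseteq> ?S1 \<union> ({c \<in> space (lebesgue_CL L). c d = 0} \<union> {c \<in> space (lebesgue_CL L). c (L - d) = 0})"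
    by auto
  moreover have "?S1 \<union> ({c \<in> space (lebesgue_CL L). c d = 0} \<union> {c \<in> space (lebesgue_CL L). c (L - d) = 0}) \<in> null_sets (lebesgue_CL L)"
    using n1 n2 n3 by auto
  ultimately show ?thesis using m1 null_sets_subset by blast
qed


lemma ee_add: "ee L (a + b) = ee L a * ee L b"
  unfolding ee_def by (simp add: exp_add[symmetric] add_divide_distrib distrib_left distrib_right)

lemma ee_period: "L \<ge> 1 \<Longrightarrow> ee L (int L * m) = 1"
proof -
  assume L: "L \<ge> 1"
  have "ee L (int L * m) = exp ((2 * of_int m * pi) * \<i>)"
    unfolding ee_def using L by (simp add: field_simps)
  also have "\<dots> = 1" by (rule exp_integer_2pi) simp
  finally show ?thesis .
qed

lemma ee_mod: "L \<ge> 1 \<Longrightarrow> a mod int L = b mod int L \<Longrightarrow> ee L a = ee L b"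
proof -
  assume L: "L \<ge> 1" and m: "a mod int L = b mod int L"
  have "a = b + int L * ((a div int L) - (b div int L))"
    using m mult_div_mod_eq[of "int L" a] mult_div_mod_eq[of "int L" b] unfolding right_diff_distrib by linarith
  hence "ee L a = ee L b * ee L (int L * ((a div int L) - (b div int L)))"
    by (subst ee_add[symmetric]) simp
  thus ?thesis using ee_period[OF L] by simp
qed

lemma cnj_ee: "cnj (ee L t) = ee L (- t)"
  unfolding ee_def by (simp add: exp_cnj)

lemma ee_one: "L \<ge> 1 \<Longrightarrow> ee L t = 1 \<Longrightarrow> int L dvd t"
proof -
  assume L: "L \<ge> 1" and e: "ee L t = 1"
  then obtain n :: int where n: "Im (2 * of_real pi * \<i> * of_int t / of_nat L) = of_int (2 * n) * pi"
    unfolding ee_def exp_eq_1 by blast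
  hence "2 * pi * t / L = 2 * n * pi" by simp
  hence "real_of_int t = real_of_int (n * int L)" using L by (simp add: field_simps)
  hence "t = n * L" by (simp only: of_int_eq_iff)
  thus ?thesis by simp
qed

lemma ee_pow: "ee L (t * int d) = ee L t ^ d"
  by (induction d) (simp_all add: distrib_left ee_add)

lemma ortho:
  assumes L: "L \<ge> 1"
  shows "(\<Sum>d<L. ee L (t * int d)) = (if int L dvd t then of_nat L else 0)"
proof (cases "int L dvd t")
  case True
  then obtain m where "t = int L * m" by blast
  hence "ee L (t * int d) = 1" for d using ee_period[OF L, of "m * int d"] by (simp add: mult.assoc)
  thus ?thesis using True by simp
next
  case False
  hence ne: "ee L t \<noteq> 1" using ee_one[OF L] by blast
  have "(\<Sum>d<L. ee L (t * int d)) = (\<Sum>d<L. ee L t ^ d)" by (simp add: ee_pow)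
  also have "\<dots> = (ee L t ^ L - 1) / (ee L t - 1)" by (rule geometric_sum[OF ne])
  also have "ee L t ^ L = 1" using ee_pow[of L t L] ee_period[OF L, of t] by (simp add: mult.commute)
  finally show ?thesis using False by simp
qed

lemma small_dvd: "a < L \<Longrightarrow> b < L \<Longrightarrow> int L dvd (int a - int b) \<longleftrightarrow> a = b"
proof
  assume ab: "a < L" "b < L" "int L dvd (int a - int b)"
  then obtain k where k: "int a - int b = int L * k" by blast
  have "k = 0"
  proof (rule ccontr)
    assume "k \<noteq> 0"
    hence "1 \<le> \<bar>k\<bar>" by linarith
    hence "int L * 1 \<le> int L * \<bar>k\<bar>" by (intro mult_left_mono) auto
    hence "\<bar>int L * k\<bar> \<ge> int L" by (simp add: abs_mult)
    with k ab show False by linarith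
  qed
  with k show "a = b" by simp
qed simp

lemma ix_shift_sum:
  assumes L: "L \<ge> 1"
  shows "(\<Sum>p<L. h (ix L (int p - int k))) = (\<Sum>m<L. h m)"
proof -
  let ?f = "\<lambda>p. ix L (int p - int k)"
  have inj: "inj_on ?f {..<L}"
  proof
    fix p p' assume pp: "p \<in> {..<L}" "p' \<in> {..<L}" "?f p = ?f p'"
    hence "(int p - int k) mod int L = (int p' - int k) mod int L"
      unfolding ix_def using L by (subst (asm) eq_nat_nat_iff) auto
    hence "int L dvd ((int p - int k) - (int p' - int k))"
      by (simp only: mod_eq_dvd_iff)
    hence "int L dvd (int p - int p')" by simp
    thus "p = p'" using small_dvd pp by auto
  qed
  have img: "?f ` {..<L} = {..<L}"
    using endo_inj_surj[of "{..<L}" ?f] inj ix_lt[OF L] by auto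
  have "(\<Sum>m<L. h m) = (\<Sum>m\<in>?f ` {..<L}. h m)" using img by simp
  also have "\<dots> = (\<Sum>p<L. h (?f p))" by (rule sum.reindex[OF inj, unfolded o_def])
  finally show ?thesis by simp
qed


lemma ix_int: "L \<ge> 1 \<Longrightarrow> int (ix L x) = x mod int L"
  unfolding ix_def by simp

lemma ee_dvd: "L \<ge> 1 \<Longrightarrow> int L dvd (a - b) \<Longrightarrow> ee L a = ee L b"
  by (rule ee_mod) (simp_all add: mod_eq_dvd_iff)

lemma tf_eq: "tfshift L (k, n) c p = ee L (int n * int p) * c (ix L (int p - int k))"
  unfolding tfshift_def modul_def transl_def ee_def ix_def by (simp add: mult.assoc)

lemma diag_sum:
  "(\<Sum>ll\<in>diag_pattern L. F ll) = (\<Sum>k<L. \<Sum>n<L. F ((k, n), (k, n)))"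
proof -
  have "diag_pattern L = (\<lambda>kn. (kn, kn)) ` ({..<L} \<times> {..<L})"
    unfolding diag_pattern_def by auto
  moreover have "inj_on (\<lambda>kn. (kn, kn)) ({..<L} \<times> {..<L})" by (auto simp: inj_on_def)
  ultimately have "(\<Sum>ll\<in>diag_pattern L. F ll) = (\<Sum>kn\<in>{..<L} \<times> {..<L}. F (kn, kn))"
    by (simp add: sum.reindex)
  also have "\<dots> = (\<Sum>k<L. \<Sum>n<L. F ((k, n), (k, n)))"
    by (simp add: sum.cartesian_product)
  finally show ?thesis .
qed

lemma pointwise1:
  fixes p d :: nat
  assumes L: "L \<ge> 1"
  defines "q \<equiv> ix L (int p - int d)"
  shows "ee L (- (int j * int p)) * (bb * ee L (int n * int p) * c (ix L (int p - int k)) *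
           cnj (ee L (int n * int q) * c (ix L (int q - int k))))
       = (bb * ee L (int n * int d) * ee L (- (int j * int k))) *
         (ee L (- (int j * int (ix L (int p - int k)))) * c (ix L (int p - int k)) *
          cnj (c (ix L (int (ix L (int p - int k)) - int d))))"
proof -
  have qi: "int q = (int p - int d) mod int L" unfolding q_def using ix_int[OF L] by simp
  have E1: "ee L (int n * int p) * cnj (ee L (int n * int q)) = ee L (int n * int d)"
  proof -
    have "ee L (int n * int p) * cnj (ee L (int n * int q)) = ee L (int n * int p - int n * int q)"
      by (simp add: cnj_ee ee_add[symmetric])
    also have "\<dots> = ee L (int n * int d)"
    proof (rule ee_dvd[OF L])
      have "int n * int p - int n * int q - int n * int d = int n * ((int p - int d) - (int p - int d) mod int L)"
        using qi by (simp add: algebra_simps)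
      also have "(int p - int d) - (int p - int d) mod int L = int L * ((int p - int d) div int L)"
        using mult_div_mod_eq[of "int L" "int p - int d"] by linarith
      finally show "int L dvd (int n * int p - int n * int q - int n * int d)" by simp
    qed
    finally show ?thesis .
  qed
  have E2: "ee L (- (int j * int p)) = ee L (- (int j * int k)) * ee L (- (int j * int (ix L (int p - int k))))"
  proof -
    have "ee L (- (int j * int k)) * ee L (- (int j * int (ix L (int p - int k)))) =
          ee L (- (int j * int k) + - (int j * int (ix L (int p - int k))))" by (simp only: ee_add)
    also have "\<dots> = ee L (- (int j * int p))"
    proof (rule ee_dvd[OF L])
      have "- (int j * int k) + - (int j * int (ix L (int p - int k))) - - (int j * int p)
            = int j * ((int p - int k) - (int p - int k) mod int L)"
        using ix_int[OF L] by (simp add: algebra_simps)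
      also have "(int p - int k) - (int p - int k) mod int L = int L * ((int p - int k) div int L)"
        using mult_div_mod_eq[of "int L" "int p - int k"] by linarith
      finally show "int L dvd (- (int j * int k) + - (int j * int (ix L (int p - int k))) - - (int j * int p))" by simp
    qed
    finally show ?thesis by simp
  qed
  have E3: "ix L (int q - int k) = ix L (int (ix L (int p - int k)) - int d)"
  proof -
    have "(int q - int k) mod int L = (int p - int d - int k) mod int L"
      unfolding qi by (simp add: mod_diff_left_eq)
    moreover have "(int (ix L (int p - int k)) - int d) mod int L = (int p - int d - int k) mod int L"
      unfolding ix_int[OF L] by (simp add: mod_diff_left_eq algebra_simps)
    ultimately show ?thesis unfolding ix_def by simp
  qed
  show ?thesis
    using E1 E2 E3 by (simp add: algebra_simps)
qed


lemma step1:
  fixes b :: "nat \<Rightarrow> nat \<Rightarrow> complex" and c :: "nat \<Rightarrow> complex"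
  assumes L: "L \<ge> 1"
  defines "G \<equiv> \<lambda>p q. (\<Sum>k<L. \<Sum>n<L. b k n * ee L (int n * int p) * c (ix L (int p - int k)) *
                 cnj (ee L (int n * int q) * c (ix L (int q - int k))))"
  shows "(\<Sum>p<L. ee L (- (int j * int p)) * G p (ix L (int p - int d)))
       = amb L c j d * (\<Sum>k<L. \<Sum>n<L. b k n * ee L (int n * int d) * ee L (- (int j * int k)))"
proof -
  define h where "h m = ee L (- (int j * int m)) * c m * cnj (c (ix L (int m - int d)))" for m
  define X where "X k n = b k n * ee L (int n * int d) * ee L (- (int j * int k))" for k n
  have "(\<Sum>p<L. ee L (- (int j * int p)) * G p (ix L (int p - int d)))
      = (\<Sum>p<L. \<Sum>k<L. \<Sum>n<L. X k n * h (ix L (int p - int k)))"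
    unfolding G_def sum_distrib_left X_def h_def
    by (intro sum.cong refl) (rule pointwise1[OF L])
  also have "\<dots> = (\<Sum>k<L. \<Sum>p<L. \<Sum>n<L. X k n * h (ix L (int p - int k)))"
    by (rule sum.swap)
  also have "\<dots> = (\<Sum>k<L. \<Sum>n<L. \<Sum>p<L. X k n * h (ix L (int p - int k)))"
    by (rule sum.cong[OF refl], rule sum.swap)
  also have "\<dots> = (\<Sum>k<L. \<Sum>n<L. X k n * (\<Sum>p<L. h (ix L (int p - int k))))"
    by (simp add: sum_distrib_left)
  also have "\<dots> = (\<Sum>k<L. \<Sum>n<L. X k n * amb L c j d)"
  proof -
    have "(\<Sum>p<L. h (ix L (int p - int k))) = amb L c j d" for k
      by (simp only: ix_shift_sum[OF L]) (simp add: amb_def h_def)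
    thus ?thesis by simp
  qed
  also have "\<dots> = amb L c j d * (\<Sum>k<L. \<Sum>n<L. X k n)"
    by (simp add: sum_distrib_left sum_distrib_right mult.commute)
  finally show ?thesis unfolding X_def .
qed

lemma step3:
  assumes L: "L \<ge> 1" and k0: "k0 < L" and n0: "n0 < L"
    and W: "\<And>j d. j < L \<Longrightarrow> d < L \<Longrightarrow> (\<Sum>k<L. \<Sum>n<L. b k n * ee L (int n * int d) * ee L (- (int j * int k))) = 0"
  shows "b k0 n0 = 0"
proof -
  define A where "A n d = ee L ((int n - int n0) * int d)" for n d
  define B where "B k j = ee L ((int k0 - int k) * int j)" for k j
  have pt: "ee L (int j * int k0) * ee L (- (int n0 * int d)) * (b k n * ee L (int n * int d) * ee L (- (int j * int k)))
     = b k n * A n d * B k j" for j d k n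
  proof -
    have "A n d = ee L (int n * int d) * ee L (- (int n0 * int d))"
      unfolding A_def by (simp add: ee_add[symmetric] algebra_simps)
    moreover have "B k j = ee L (int j * int k0) * ee L (- (int j * int k))"
      unfolding B_def by (simp add: ee_add[symmetric] algebra_simps)
    ultimately show ?thesis by (simp add: algebra_simps)
  qed
  have "0 = (\<Sum>j<L. \<Sum>d<L. ee L (int j * int k0) * ee L (- (int n0 * int d)) *
              (\<Sum>k<L. \<Sum>n<L. b k n * ee L (int n * int d) * ee L (- (int j * int k))))"
    using W by simp
  also have "\<dots> = (\<Sum>j<L. \<Sum>d<L. \<Sum>k<L. \<Sum>n<L. b k n * A n d * B k j)"
    unfolding sum_distrib_left pt ..
  also have "\<dots> = (\<Sum>j<L. \<Sum>k<L. \<Sum>d<L. \<Sum>n<L. b k n * A n d * B k j)"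
    by (rule sum.cong[OF refl], rule sum.swap)
  also have "\<dots> = (\<Sum>k<L. \<Sum>j<L. \<Sum>d<L. \<Sum>n<L. b k n * A n d * B k j)"
    by (rule sum.swap)
  also have "\<dots> = (\<Sum>k<L. \<Sum>j<L. \<Sum>n<L. \<Sum>d<L. b k n * A n d * B k j)"
    by (rule sum.cong[OF refl], rule sum.cong[OF refl], rule sum.swap)
  also have "\<dots> = (\<Sum>k<L. \<Sum>n<L. \<Sum>j<L. \<Sum>d<L. b k n * A n d * B k j)"
    by (rule sum.cong[OF refl], rule sum.swap)
  also have "\<dots> = (\<Sum>k<L. \<Sum>n<L. b k n * (\<Sum>d<L. A n d) * (\<Sum>j<L. B k j))"
    by (simp add: sum_distrib_left sum_distrib_right mult.assoc mult.left_commute)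
  also have "\<dots> = (\<Sum>k<L. \<Sum>n<L. if k = k0 \<and> n = n0 then b k n * of_nat L * of_nat L else 0)"
  proof (intro sum.cong refl)
    fix k n assume k: "k \<in> {..<L}" and n: "n \<in> {..<L}"
    have sA: "(\<Sum>d<L. A n d) = (if n = n0 then of_nat L else 0)"
      unfolding A_def ortho[OF L] using small_dvd[of n L n0] n n0 by auto
    have sB: "(\<Sum>j<L. B k j) = (if k = k0 then of_nat L else 0)"
      unfolding B_def ortho[OF L] using small_dvd[of k0 L k] k k0 by auto
    show "b k n * (\<Sum>d<L. A n d) * (\<Sum>j<L. B k j) = (if k = k0 \<and> n = n0 then b k n * of_nat L * of_nat L else 0)"
      unfolding sA sB by auto
  qed
  also have "\<dots> = (\<Sum>k<L. if k = k0 then (\<Sum>n<L. if n = n0 then b k n * of_nat L * of_nat L else 0) else 0)"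
    by (rule sum.cong[OF refl]) auto
  also have "\<dots> = b k0 n0 * of_nat L * of_nat L"
    using k0 n0 by (simp add: sum.delta sum.delta')
  finally show ?thesis using L by simp
qed


lemma perm_of_amb:
  assumes L: "L \<ge> 1" and nz: "\<And>j d. j < L \<Longrightarrow> d < L \<Longrightarrow> amb L c j d \<noteq> 0"
  shows "permissible L (diag_pattern L) c"
  unfolding permissible_def
proof (intro allI impI)
  fix a :: "(nat \<times> nat) \<times> (nat \<times> nat) \<Rightarrow> complex"
  assume H: "\<forall>p<L. \<forall>q<L. (\<Sum>ll\<in>diag_pattern L. a ll * tfshift L (fst ll) c p * cnj (tfshift L (snd ll) c q)) = 0"
  define b where "b k n = a ((k, n), (k, n))" for k n
  have G0: "(\<Sum>k<L. \<Sum>n<L. b k n * ee L (int n * int p) * c (ix L (int p - int k)) *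
                 cnj (ee L (int n * int q) * c (ix L (int q - int k)))) = 0" if "p < L" "q < L" for p q
    using H that unfolding diag_sum b_def by (simp add: tf_eq mult.assoc)
  have W: "(\<Sum>k<L. \<Sum>n<L. b k n * ee L (int n * int d) * ee L (- (int j * int k))) = 0"
    if j: "j < L" and d: "d < L" for j d
  proof -
    have "amb L c j d * (\<Sum>k<L. \<Sum>n<L. b k n * ee L (int n * int d) * ee L (- (int j * int k))) = 0"
      unfolding step1[OF L, symmetric] using G0 ix_lt[OF L] by simp
    thus ?thesis using nz[OF j d] by simp
  qed
  show "\<forall>ll\<in>diag_pattern L. a ll = 0"
  proof
    fix ll assume "ll \<in> diag_pattern L"
    then obtain k n where ll: "ll = ((k, n), (k, n))" "k < L" "n < L" unfolding diag_pattern_def by auto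
    have "b k n = 0" by (rule step3[OF L ll(2) ll(3) W])
    thus "a ll = 0" using ll(1) b_def by simp
  qed
qed

theorem mainTheorem8:
  fixes L :: nat
  assumes "L \<ge> 1"
  shows "AE c in lebesgue_CL L. permissible L (diag_pattern L) c"
proof (rule AE_I')
  let ?N = "\<Union>jd\<in>{..<L} \<times> {..<L}. {c \<in> space (lebesgue_CL L). amb L c (fst jd) (snd jd) = 0}"
  show "?N \<in> null_sets (lebesgue_CL L)"
    by (rule null_sets_UN') (auto intro!: amb_null assms)
  show "{c \<in> space (lebesgue_CL L). \<not> permissible L (diag_pattern L) c} \<subseteq> ?N"
    using perm_of_amb[OF assms] by fastforce
qed

end
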